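(* Let $N\ge 1$. Make the following two assumptions. (Exchangeability.) For every permutation $\sigma$ of $\{1,\dots,N\}$, the family $$\big((\bar a_{l-1})_{b,\sigma(m)}\big)_{l,b,m}\ \text{together with}\ \big(D^{(\sigma(n))}_{l,l'}(a,\sigma(m);c,\sigma(m'))\big)_{l,l',a,c,n,m,m'}$$ has the same joint distribution as the unpermuted family $\big((\bar a_{l-1})_{b,m}\big)$, $\big(D^{(n)}_{l,l'}(a,m;c,m')\big)$. (Factorization.) For all $l,l',a,b,c,d$ and all permutations $\pi,\pi'$ of $\{1,\dots,N\}$, $$\mathbb{E}\Big[\mathbb{E}_n\big[(\bar a_{l-1})_{b,\pi(n)}(\bar a_{l'-1})_{d,\pi'(n)}\,D^{(n)}_{l,l'}(a,\pi(n);c,\pi'(n))\big]\Big]=\mathbb{E}\Big[\mathbb{E}_n\big[(\bar a_{l-1})_{b,\pi(n)}(\bar a_{l'-1})_{d,\pi'(n)}\big]\Big]\cdot\mathbb{E}\Big[\mathbb{E}_n\big[D^{(n)}_{l,l'}(a,\pi(n);c,\pi'(n))\big]\Big].$$ Under these assumptions, $$H=\bar A*\mathcal{H}'+\frac{1}{\max(N-1,1)}\big(N\bar A'-\bar A\big)*(\mathcal{H}''-\mathcal{H}').$$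
   Context: Setting. Fix layer widths $C_0,\dots,C_L$ and a mini-batch size $N$. For $l=1,\dots,L$, let $\bar a_{l-1}\in\mathbb{R}^{(C_{l-1}+1)\times N}$ be random matrices; these are the activations of layer $l-1$ with a row of ones appended. For $n,m,m'\in\{1,\dots,N\}$, $l,l'\in\{1,\dots,L\}$, $a\in\{1,\dots,C_l\}$ and $c\in\{1,\dots,C_{l'}\}$, let $D^{(n)}_{l,l'}(a,m;c,m')$ be real random variables; these stand for the second derivatives $\partial^2\mathcal{L}_n/\partial(h_l)_{a,m}\partial(h_{l'})_{c,m'}$ of the $n$-th example's loss with respect to pre-activations. All these random variables are defined on a common probability space (the random sampling of a mini-batch with its labels). $\mathbb{E}$ denotes expectation over that randomness. $\mathbb{E}_n[\cdot]=\frac1N\sum_{n=1}^N[\cdot]$ is the average over the example index. All expectations appearing are assumed finite. Block matrices. Define block matrices whose $(l,l')$ blocks are as follows, with $\{M\}_{l,l'}$ denoting block $(l,l')$: - $(\{\bar A\}_{l,l'})_{b,d}=\mathbb{E}\big[\mathbb{E}_n[(\bar a_{l-1})_{b,n}(\bar a_{l'-1})_{d,n}]\big]$; - $(\{\bar A'\}_{l,l'})_{b,d}=\mathbb{E}\big[\mathbb{E}_n[(\bar a_{l-1})_{b,n}]\,\mathbb{E}_n[(\bar a_{l'-1})_{d,n}]\big]$; - $(\{\mathcal{H}'\}_{l,l'})_{a,c}=\mathbb{E}\big[\mathbb{E}_n[\sum_{m}D^{(n)}_{l,l'}(a,m;c,m)]\big]$; - $(\{\mathcal{H}''\}_{l,l'})_{a,c}=\mathbb{E}\big[\mathbb{E}_n[\sum_{m,m'}D^{(n)}_{l,l'}(a,m;c,m')]\big]$.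 So $\{\bar A\}_{l,l'}$ and $\{\bar A'\}_{l,l'}$ are $(C_{l-1}+1)\times(C_{l'-1}+1)$, and $\{\mathcal{H}'\}_{l,l'}$ and $\{\mathcal{H}''\}_{l,l'}$ are $C_l\times C_{l'}$. Let $H$ be the block matrix whose block $(l,l')$ has size $C_l(C_{l-1}+1)\times C_{l'}(C_{l'-1}+1)$. Its entry in row $(b-1)C_l+a$ and column $(d-1)C_{l'}+c$ is $$\mathbb{E}\Big[\mathbb{E}_n\Big[\sum_{m,m'}(\bar a_{l-1})_{b,m}(\bar a_{l'-1})_{d,m'}D^{(n)}_{l,l'}(a,m;c,m')\Big]\Big].$$ This is the expected Hessian of the averaged loss with respect to the column-major vectorized weights $\mathrm{vec}(W_l)$. Khatri–Rao product. For two block matrices $P,Q$ with the same block layout, $P*Q$ is the block matrix with blocks $\{P*Q\}_{l,l'}=\{P\}_{l,l'}\otimes\{Q\}_{l,l'}$, where $\otimes$ is the Kronecker product. *)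

theory Defs
  imports "HOL-Probability.Probability"
begin

text \<open>Conventions.
  abar l b m \<omega>  stands for the entry (b,m) of the augmented activation matrix of layer l-1,
     with 1 \<le> b \<le> C (l-1) + 1 and 1 \<le> m \<le> N.
  D n l l' a m c m' \<omega>  stands for D^(n)_{l,l'}(a,m;c,m').
  Block matrices are functions  l l' i j  with 1-based row/column indices.\<close>

definition En :: "nat \<Rightarrow> (nat \<Rightarrow> real) \<Rightarrow> real" where
  "En N f = (1 / real N) * (\<Sum>n = 1..N. f n)"

definition Abar_blk :: "'w measure \<Rightarrow> nat \<Rightarrow> (nat \<Rightarrow> nat \<Rightarrow> nat \<Rightarrow> 'w \<Rightarrow> real)
    \<Rightarrow> nat \<Rightarrow> nat \<Rightarrow> nat \<Rightarrow> nat \<Rightarrow> real" where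
  "Abar_blk M N abar l l' b d =
     (LINT \<omega>|M. En N (\<lambda>n. abar l b n \<omega> * abar l' d n \<omega>))"

definition Abar'_blk :: "'w measure \<Rightarrow> nat \<Rightarrow> (nat \<Rightarrow> nat \<Rightarrow> nat \<Rightarrow> 'w \<Rightarrow> real)
    \<Rightarrow> nat \<Rightarrow> nat \<Rightarrow> nat \<Rightarrow> nat \<Rightarrow> real" where
  "Abar'_blk M N abar l l' b d =
     (LINT \<omega>|M. En N (\<lambda>n. abar l b n \<omega>) * En N (\<lambda>n. abar l' d n \<omega>))"

definition H'_blk :: "'w measure \<Rightarrow> nat
    \<Rightarrow> (nat \<Rightarrow> nat \<Rightarrow> nat \<Rightarrow> nat \<Rightarrow> nat \<Rightarrow> nat \<Rightarrow> nat \<Rightarrow> 'w \<Rightarrow> real)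
    \<Rightarrow> nat \<Rightarrow> nat \<Rightarrow> nat \<Rightarrow> nat \<Rightarrow> real" where
  "H'_blk M N D l l' a c =
     (LINT \<omega>|M. En N (\<lambda>n. \<Sum>m = 1..N. D n l l' a m c m \<omega>))"

definition H''_blk :: "'w measure \<Rightarrow> nat
    \<Rightarrow> (nat \<Rightarrow> nat \<Rightarrow> nat \<Rightarrow> nat \<Rightarrow> nat \<Rightarrow> nat \<Rightarrow> nat \<Rightarrow> 'w \<Rightarrow> real)
    \<Rightarrow> nat \<Rightarrow> nat \<Rightarrow> nat \<Rightarrow> nat \<Rightarrow> real" where
  "H''_blk M N D l l' a c =
     (LINT \<omega>|M. En N (\<lambda>n. \<Sum>m = 1..N. \<Sum>m' = 1..N. D n l l' a m c m' \<omega>))"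

text \<open>Entry of the expected Hessian block (l,l') at row (b-1)C_l+a, column (d-1)C_{l'}+c.\<close>
definition Hess_entry :: "'w measure \<Rightarrow> nat \<Rightarrow> (nat \<Rightarrow> nat \<Rightarrow> nat \<Rightarrow> 'w \<Rightarrow> real)
    \<Rightarrow> (nat \<Rightarrow> nat \<Rightarrow> nat \<Rightarrow> nat \<Rightarrow> nat \<Rightarrow> nat \<Rightarrow> nat \<Rightarrow> 'w \<Rightarrow> real)
    \<Rightarrow> nat \<Rightarrow> nat \<Rightarrow> nat \<Rightarrow> nat \<Rightarrow> nat \<Rightarrow> nat \<Rightarrow> real" where
  "Hess_entry M N abar D l l' a b c d =
     (LINT \<omega>|M. En N (\<lambda>n. \<Sum>m = 1..N. \<Sum>m' = 1..N.
        abar l b m \<omega> * abar l' d m' \<omega> * D n l l' a m c m' \<omega>))"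

definition Hess_blk :: "'w measure \<Rightarrow> nat \<Rightarrow> (nat \<Rightarrow> nat) \<Rightarrow> (nat \<Rightarrow> nat \<Rightarrow> nat \<Rightarrow> 'w \<Rightarrow> real)
    \<Rightarrow> (nat \<Rightarrow> nat \<Rightarrow> nat \<Rightarrow> nat \<Rightarrow> nat \<Rightarrow> nat \<Rightarrow> nat \<Rightarrow> 'w \<Rightarrow> real)
    \<Rightarrow> nat \<Rightarrow> nat \<Rightarrow> nat \<Rightarrow> nat \<Rightarrow> real" where
  "Hess_blk M N C abar D l l' i j =
     Hess_entry M N abar D l l'
       ((i - 1) mod C l + 1) ((i - 1) div C l + 1)
       ((j - 1) mod C l' + 1) ((j - 1) div C l' + 1)"

definition kron :: "(nat \<Rightarrow> nat \<Rightarrow> real) \<Rightarrow> (nat \<Rightarrow> nat \<Rightarrow> real) \<Rightarrow> nat \<Rightarrow> nat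
    \<Rightarrow> nat \<Rightarrow> nat \<Rightarrow> real" where
  "kron P Q qr qc i j =
     P ((i - 1) div qr + 1) ((j - 1) div qc + 1) * Q ((i - 1) mod qr + 1) ((j - 1) mod qc + 1)"

text \<open>Khatri-Rao (blockwise Kronecker) product; block (l,l') of Q has size C l x C l'.\<close>
definition khatri_rao :: "(nat \<Rightarrow> nat) \<Rightarrow> (nat \<Rightarrow> nat \<Rightarrow> nat \<Rightarrow> nat \<Rightarrow> real)
    \<Rightarrow> (nat \<Rightarrow> nat \<Rightarrow> nat \<Rightarrow> nat \<Rightarrow> real) \<Rightarrow> nat \<Rightarrow> nat \<Rightarrow> nat \<Rightarrow> nat \<Rightarrow> real" where
  "khatri_rao C P Q l l' = kron (P l l') (Q l l') (C l) (C l')"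

definition fam_idx :: "nat \<Rightarrow> nat \<Rightarrow> (nat \<Rightarrow> nat)
    \<Rightarrow> ((nat \<times> nat \<times> nat) + (nat \<times> nat \<times> nat \<times> nat \<times> nat \<times> nat \<times> nat)) set" where
  "fam_idx L N C =
     Inl ` {(l, b, m). l \<in> {1..L} \<and> b \<in> {1..C (l - 1) + 1} \<and> m \<in> {1..N}} \<union>
     Inr ` {(l, l', a, c, n, m, m'). l \<in> {1..L} \<and> l' \<in> {1..L} \<and> a \<in> {1..C l} \<and>
              c \<in> {1..C l'} \<and> n \<in> {1..N} \<and> m \<in> {1..N} \<and> m' \<in> {1..N}}"

definition fam :: "nat \<Rightarrow> nat \<Rightarrow> (nat \<Rightarrow> nat) \<Rightarrow> (nat \<Rightarrow> nat \<Rightarrow> nat \<Rightarrow> 'w \<Rightarrow> real)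
    \<Rightarrow> (nat \<Rightarrow> nat \<Rightarrow> nat \<Rightarrow> nat \<Rightarrow> nat \<Rightarrow> nat \<Rightarrow> nat \<Rightarrow> 'w \<Rightarrow> real) \<Rightarrow> (nat \<Rightarrow> nat)
    \<Rightarrow> 'w \<Rightarrow> ((nat \<times> nat \<times> nat) + (nat \<times> nat \<times> nat \<times> nat \<times> nat \<times> nat \<times> nat)) \<Rightarrow> real" where
  "fam L N C abar D \<sigma> \<omega> =
     (\<lambda>x\<in>fam_idx L N C. case x of
        Inl (l, b, m) \<Rightarrow> abar l b (\<sigma> m) \<omega>
      | Inr (l, l', a, c, n, m, m') \<Rightarrow> D (\<sigma> n) l l' a (\<sigma> m) c (\<sigma> m') \<omega>)"

end

theory Submission
  imports Defs
begin


definition sh :: "nat \<Rightarrow> nat \<Rightarrow> nat \<Rightarrow> nat" where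
  "sh N k n = (if n \<in> {1..N} then (n - 1 + k) mod N + 1 else n)"

lemma mod_cancel_aux:
  fixes x k k' N :: nat
  assumes "(x + k) mod N = (x + k') mod N" "k < N" "k' < N"
  shows "k = k'"
proof -
  have "int k mod int N = int k' mod int N"
    using assms(1) by (metis mod_add_left_eq mod_add_right_eq add_diff_cancel_left' mod_diff_left_eq of_nat_add of_nat_mod)
  then show ?thesis using assms(2,3) by (simp add: zmod_int[symmetric])
qed

lemma sh_in: "n \<in> {1..N} \<Longrightarrow> sh N k n \<in> {1..N}"
  unfolding sh_def by (auto simp: Suc_le_eq)

lemma sh_bij_k: assumes n: "n \<in> {1..N}" shows "bij_betw (\<lambda>k. sh N k n) {0..<N} {1..N}"
proof -
  have inj: "inj_on (\<lambda>k. sh N k n) {0..<N}"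
  proof (rule inj_onI)
    fix k k' assume "k \<in> {0..<N}" "k' \<in> {0..<N}" "sh N k n = sh N k' n"
    then show "k = k'" using n mod_cancel_aux[of "n-1" k N k'] by (auto simp: sh_def)
  qed
  have sub: "(\<lambda>k. sh N k n) ` {0..<N} \<subseteq> {1..N}" using sh_in[OF n] by auto
  have "card ((\<lambda>k. sh N k n) ` {0..<N}) = card {1..N}" using card_image[OF inj] by simp
  then have "(\<lambda>k. sh N k n) ` {0..<N} = {1..N}" using sub by (intro card_subset_eq) auto
  then show ?thesis using inj by (simp add: bij_betw_def)
qed

lemma sh_permutes: assumes k: "k < N" shows "sh N k permutes {1..N}"
proof (rule bij_imp_permutes)
  have inj: "inj_on (sh N k) {1..N}"
  proof (rule inj_onI)
    fix n n' assume a: "n \<in> {1..N}" "n' \<in> {1..N}" "sh N k n = sh N k n'"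
    then have "(k + (n - 1)) mod N = (k + (n' - 1)) mod N" by (simp add: sh_def add.commute)
    then have "n - 1 = n' - 1" using a mod_cancel_aux[of k "n-1" N "n'-1"] by auto
    then show "n = n'" using a by auto
  qed
  have sub: "sh N k ` {1..N} \<subseteq> {1..N}" using sh_in by auto
  then have "sh N k ` {1..N} = {1..N}" using inj by (intro card_subset_eq) (auto simp: card_image)
  then show "bij_betw (sh N k) {1..N} {1..N}" using inj by (simp add: bij_betw_def)
  show "\<And>x. x \<notin> {1..N} \<Longrightarrow> sh N k x = x" by (auto simp: sh_def)
qed

lemma En_sum: "finite K \<Longrightarrow> En N (\<lambda>n. \<Sum>k\<in>K. g n k) = (\<Sum>k\<in>K. En N (\<lambda>n. g n k))"
  unfolding En_def by (simp add: sum_distrib_left) (rule sum.swap)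

lemma En_prod: "En N f * En N g = En N (\<lambda>m. En N (\<lambda>m'. f m * g m'))"
  unfolding En_def by (simp add: sum_product sum_distrib_left mult_ac) (rule sum.swap)

lemma En_const: "N \<ge> 1 \<Longrightarrow> En N (\<lambda>n. c) = c"
  unfolding En_def by simp

lemma En_cong: "(\<And>n. n \<in> {1..N} \<Longrightarrow> f n = g n) \<Longrightarrow> En N f = En N g"
  unfolding En_def by (metis sum.cong)

lemma int_En: "(\<And>n. n \<in> {1..N} \<Longrightarrow> integrable M (g n)) \<Longrightarrow>
   (LINT \<omega>|M. En N (\<lambda>n. g n \<omega>)) = En N (\<lambda>n. LINT \<omega>|M. g n \<omega>)"
  unfolding En_def by (simp add: integral_sum)

lemma int_En_int: "(\<And>n. n \<in> {1..N} \<Longrightarrow> integrable M (g n)) \<Longrightarrow>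
   integrable M (\<lambda>\<omega>. En N (\<lambda>n. g n \<omega>))"
  unfolding En_def by (intro integrable_mult_right integrable_sum) auto



lemma pair_perm:
  fixes N m m' :: nat
  assumes N: "N \<ge> 2" and m: "m \<in> {1..N}" and m': "m' \<in> {1..N}" and ne: "m \<noteq> m'"
  shows "\<exists>\<sigma>. \<sigma> permutes {1..N} \<and> \<sigma> 1 = m \<and> \<sigma> 2 = m'"
proof -
  define \<tau> where "\<tau> = Transposition.transpose (1::nat) m"
  define \<sigma> where "\<sigma> = Transposition.transpose m' (\<tau> 2) \<circ> \<tau>"
  have t2: "\<tau> 2 \<in> {1, 2}" "\<tau> 2 \<noteq> m" unfolding \<tau>_def by (auto simp: Transposition.transpose_def)
  have p1: "\<tau> permutes {1..N}" unfolding \<tau>_def using m N by (intro permutes_swap_id) auto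
  have p2: "Transposition.transpose m' (\<tau> 2) permutes {1..N}" using t2(1) N m' by (intro permutes_swap_id) auto
  have "\<sigma> permutes {1..N}" unfolding \<sigma>_def using p1 p2 by (rule permutes_compose)
  moreover have "\<sigma> 1 = m" using t2 ne unfolding \<sigma>_def by (auto simp: \<tau>_def Transposition.transpose_def)
  moreover have "\<sigma> 2 = m'" unfolding \<sigma>_def by simp
  ultimately show ?thesis by blast
qed

lemma En_add_const: "N \<ge> 1 \<Longrightarrow> En N (\<lambda>n. f n + c) = En N f + c"
  unfolding En_def by (simp add: sum.distrib field_simps)

lemma alg:
  fixes e y :: "nat \<Rightarrow> nat \<Rightarrow> nat \<Rightarrow> real" and p :: "nat \<Rightarrow> nat \<Rightarrow> real"
  assumes N: "N \<ge> 1"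
    and fact: "\<And>\<pi> \<pi>'. \<pi> permutes {1..N} \<Longrightarrow> \<pi>' permutes {1..N} \<Longrightarrow>
      En N (\<lambda>n. e n (\<pi> n) (\<pi>' n)) = En N (\<lambda>n. p (\<pi> n) (\<pi>' n)) * En N (\<lambda>n. y n (\<pi> n) (\<pi>' n))"
    and exch: "\<And>\<sigma>. N \<ge> 2 \<Longrightarrow> \<sigma> permutes {1..N} \<Longrightarrow> p (\<sigma> 1) (\<sigma> 2) = p 1 2"
  shows "En N (\<lambda>n. \<Sum>m=1..N. \<Sum>m'=1..N. e n m m') =
     En N (\<lambda>n. p n n) * En N (\<lambda>n. \<Sum>m=1..N. y n m m) + 1 / real (max (N - 1) 1) *
     ((real N * En N (\<lambda>m. En N (\<lambda>m'. p m m')) - En N (\<lambda>n. p n n)) *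
      (En N (\<lambda>n. \<Sum>m=1..N. \<Sum>m'=1..N. y n m m') - En N (\<lambda>n. \<Sum>m=1..N. y n m m)))"
proof -
  define Ab where "Ab = En N (\<lambda>n. p n n)"
  define xoff where "xoff = (real N * En N (\<lambda>m. En N (\<lambda>m'. p m m')) - Ab) / real (max (N - 1) 1)"
  define AX where "AX k k' = En N (\<lambda>n. p (sh N k n) (sh N k' n))" for k k'
  define EY where "EY k k' = En N (\<lambda>n. y n (sh N k n) (sh N k' n))" for k k'
  have pair: "p m m' = xoff" if m: "m \<in> {1..N}" "m' \<in> {1..N}" "m \<noteq> m'" for m m'
  proof -
    have N2: "N \<ge> 2" using m by auto
    have pp: "p a a' = p 1 2" if "a \<in> {1..N}" "a' \<in> {1..N}" "a \<noteq> a'" for a a'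
      using pair_perm[OF N2 that] exch[OF N2] by blast
    have row: "(\<Sum>a'=1..N. p a a') = p a a + real (N - 1) * p 1 2" if a: "a \<in> {1..N}" for a
    proof -
      have "(\<Sum>a'=1..N. p a a') = p a a + (\<Sum>a'\<in>{1..N} - {a}. p a a')"
        using a by (simp add: sum.remove)
      also have "(\<Sum>a'\<in>{1..N} - {a}. p a a') = (\<Sum>a'\<in>{1..N} - {a}. p 1 2)"
        by (intro sum.cong refl pp) (use a in auto)
      also have "\<dots> = real (N - 1) * p 1 2" using a by simp
      finally show ?thesis .
    qed
    have "real N * En N (\<lambda>a. En N (\<lambda>a'. p a a')) = En N (\<lambda>a. \<Sum>a'=1..N. p a a')"
      using N by (simp add: En_def sum_distrib_left)
    also have "\<dots> = En N (\<lambda>a. p a a + real (N - 1) * p 1 2)" by (rule En_cong) (rule row)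
    also have "\<dots> = Ab + real (N - 1) * p 1 2" using N by (simp add: Ab_def En_add_const)
    moreover have "max (N - 1) 1 = N - 1" using N2 by simp
    ultimately have "xoff = real (N - 1) * p 1 2 / real (N - 1)"
      by (simp only: xoff_def) simp
    then have "xoff = p 1 2" using N2 by simp
    then show ?thesis using pp[OF m] by simp
  qed
  have AXd: "AX k k = Ab" if "k < N" for k
  proof -
    have "AX k k = (1 / real N) * (\<Sum>n=1..N. p (sh N k n) (sh N k n))" by (simp add: AX_def En_def)
    also have "(\<Sum>n=1..N. p (sh N k n) (sh N k n)) = (\<Sum>n=1..N. p n n)"
      using sum.reindex_bij_betw[OF permutes_imp_bij[OF sh_permutes[OF that]], of "\<lambda>n. p n n"] .
    finally show ?thesis by (simp add: Ab_def En_def)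
  qed
  have AXo: "AX k k' = xoff" if "k < N" "k' < N" "k \<noteq> k'" for k k'
  proof -
    have "AX k k' = En N (\<lambda>n. xoff)" unfolding AX_def
    proof (rule En_cong)
      fix n assume n: "n \<in> {1..N}"
      have "sh N k n \<noteq> sh N k' n" using bij_betw_imp_inj_on[OF sh_bij_k[OF n]] that
        by (auto dest: inj_onD)
      then show "p (sh N k n) (sh N k' n) = xoff" using sh_in[OF n] by (intro pair) auto
    qed
    then show ?thesis using N by (simp add: En_const)
  qed
  have reidx: "(\<Sum>m=1..N. \<Sum>m'=1..N. f m m') = (\<Sum>k<N. \<Sum>k'<N. f (sh N k n) (sh N k' n))"
    if n: "n \<in> {1..N}" for f :: "nat \<Rightarrow> nat \<Rightarrow> real" and n
  proof -
    have "(\<Sum>k<N. \<Sum>k'<N. f (sh N k n) (sh N k' n)) = (\<Sum>k<N. \<Sum>m'=1..N. f (sh N k n) m')"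
    proof (rule sum.cong[OF refl])
      fix k show "(\<Sum>k'<N. f (sh N k n) (sh N k' n)) = (\<Sum>m'=1..N. f (sh N k n) m')"
        using sum.reindex_bij_betw[OF sh_bij_k[OF n], of "f (sh N k n)"] by (simp add: lessThan_atLeast0)
    qed
    also have "\<dots> = (\<Sum>m=1..N. \<Sum>m'=1..N. f m m')"
      using sum.reindex_bij_betw[OF sh_bij_k[OF n], of "\<lambda>m. \<Sum>m'=1..N. f m m'"] by (simp add: lessThan_atLeast0)
    finally show ?thesis by simp
  qed
  have reidx1: "(\<Sum>m=1..N. f m) = (\<Sum>k<N. f (sh N k n))"
    if n: "n \<in> {1..N}" for f :: "nat \<Rightarrow> real" and n
    using sum.reindex_bij_betw[OF sh_bij_k[OF n], of f] by (simp add: lessThan_atLeast0)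
  have LHS: "En N (\<lambda>n. \<Sum>m=1..N. \<Sum>m'=1..N. e n m m') = (\<Sum>k<N. \<Sum>k'<N. AX k k' * EY k k')"
  proof -
    have "En N (\<lambda>n. \<Sum>m=1..N. \<Sum>m'=1..N. e n m m') = En N (\<lambda>n. \<Sum>k<N. \<Sum>k'<N. e n (sh N k n) (sh N k' n))"
      by (rule En_cong) (rule reidx)
    also have "\<dots> = (\<Sum>k<N. \<Sum>k'<N. En N (\<lambda>n. e n (sh N k n) (sh N k' n)))"
      by (simp add: En_sum)
    also have "\<dots> = (\<Sum>k<N. \<Sum>k'<N. AX k k' * EY k k')"
      unfolding AX_def EY_def by (intro sum.cong refl fact sh_permutes) auto
    finally show ?thesis .
  qed
  have H2: "En N (\<lambda>n. \<Sum>m=1..N. \<Sum>m'=1..N. y n m m') = (\<Sum>k<N. \<Sum>k'<N. EY k k')"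
  proof -
    have "En N (\<lambda>n. \<Sum>m=1..N. \<Sum>m'=1..N. y n m m') = En N (\<lambda>n. \<Sum>k<N. \<Sum>k'<N. y n (sh N k n) (sh N k' n))"
      by (rule En_cong) (rule reidx)
    then show ?thesis by (simp add: En_sum EY_def)
  qed
  have H1: "En N (\<lambda>n. \<Sum>m=1..N. y n m m) = (\<Sum>k<N. EY k k)"
  proof -
    have "En N (\<lambda>n. \<Sum>m=1..N. y n m m) = En N (\<lambda>n. \<Sum>k<N. y n (sh N k n) (sh N k n))"
      by (rule En_cong) (rule reidx1)
    then show ?thesis by (simp add: En_sum EY_def)
  qed
  have "(\<Sum>k<N. \<Sum>k'<N. AX k k' * EY k k') =
        (\<Sum>k<N. \<Sum>k'<N. xoff * EY k k' + (if k = k' then (Ab - xoff) * EY k k' else 0))"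
    by (intro sum.cong refl) (auto simp: AXd AXo algebra_simps)
  also have "\<dots> = xoff * (\<Sum>k<N. \<Sum>k'<N. EY k k') + (Ab - xoff) * (\<Sum>k<N. EY k k)"
    by (simp add: sum.distrib sum_distrib_left)
  finally have X: "(\<Sum>k<N. \<Sum>k'<N. AX k k' * EY k k') =
     xoff * (\<Sum>k<N. \<Sum>k'<N. EY k k') + (Ab - xoff) * (\<Sum>k<N. EY k k)" .
  have Y: "1 / real (max (N - 1) 1) * ((real N * En N (\<lambda>m. En N (\<lambda>m'. p m m')) - Ab) * B) = xoff * B" for B
    by (simp add: xoff_def)
  show ?thesis unfolding LHS H1 H2 Ab_def[symmetric] X Y
    by (simp add: algebra_simps)
qed



lemma int_dsum:
  assumes "\<And>m m'. m \<in> A \<Longrightarrow> m' \<in> B \<Longrightarrow> integrable M (f m m')"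
  shows "(LINT \<omega>|M. (\<Sum>m\<in>A. \<Sum>m'\<in>B. f m m' \<omega>)) = (\<Sum>m\<in>A. \<Sum>m'\<in>B. (LINT \<omega>|M. f m m' \<omega>))"
    "integrable M (\<lambda>\<omega>. \<Sum>m\<in>A. \<Sum>m'\<in>B. f m m' \<omega>)"
proof -
  have i1: "integrable M (\<lambda>\<omega>. \<Sum>m'\<in>B. f m m' \<omega>)" if "m \<in> A" for m
    using assms that by (intro Bochner_Integration.integrable_sum) auto
  show "integrable M (\<lambda>\<omega>. \<Sum>m\<in>A. \<Sum>m'\<in>B. f m m' \<omega>)"
    using i1 by (rule Bochner_Integration.integrable_sum)
  have "(LINT \<omega>|M. (\<Sum>m\<in>A. \<Sum>m'\<in>B. f m m' \<omega>)) = (\<Sum>m\<in>A. (LINT \<omega>|M. (\<Sum>m'\<in>B. f m m' \<omega>)))"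
    using i1 by (rule Bochner_Integration.integral_sum)
  also have "\<dots> = (\<Sum>m\<in>A. \<Sum>m'\<in>B. (LINT \<omega>|M. f m m' \<omega>))"
    using assms by (intro sum.cong refl Bochner_Integration.integral_sum) auto
  finally show "(LINT \<omega>|M. (\<Sum>m\<in>A. \<Sum>m'\<in>B. f m m' \<omega>)) = (\<Sum>m\<in>A. \<Sum>m'\<in>B. (LINT \<omega>|M. f m m' \<omega>))" .
qed

lemma int_sum1:
  assumes "\<And>m. m \<in> A \<Longrightarrow> integrable M (f m)"
  shows "(LINT \<omega>|M. (\<Sum>m\<in>A. f m \<omega>)) = (\<Sum>m\<in>A. (LINT \<omega>|M. f m \<omega>))"
    "integrable M (\<lambda>\<omega>. \<Sum>m\<in>A. f m \<omega>)"
  using assms by (auto intro: Bochner_Integration.integral_sum Bochner_Integration.integrable_sum)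

theorem theorem2:
  fixes M :: "'w measure" and L N :: nat and C :: "nat \<Rightarrow> nat"
    and abar :: "nat \<Rightarrow> nat \<Rightarrow> nat \<Rightarrow> 'w \<Rightarrow> real"
    and D :: "nat \<Rightarrow> nat \<Rightarrow> nat \<Rightarrow> nat \<Rightarrow> nat \<Rightarrow> nat \<Rightarrow> nat \<Rightarrow> 'w \<Rightarrow> real"
  assumes P: "prob_space M"
    and N: "N \<ge> 1"
    and meas_a: "\<And>l b m. l \<in> {1..L} \<Longrightarrow> b \<in> {1..C (l - 1) + 1} \<Longrightarrow> m \<in> {1..N} \<Longrightarrow>
        abar l b m \<in> borel_measurable M"
    and meas_D: "\<And>n l l' a m c m'. n \<in> {1..N} \<Longrightarrow> l \<in> {1..L} \<Longrightarrow> l' \<in> {1..L} \<Longrightarrow>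
        a \<in> {1..C l} \<Longrightarrow> c \<in> {1..C l'} \<Longrightarrow> m \<in> {1..N} \<Longrightarrow> m' \<in> {1..N} \<Longrightarrow>
        D n l l' a m c m' \<in> borel_measurable M"
    and int_aaD: "\<And>n l l' a b c d m m'. n \<in> {1..N} \<Longrightarrow> l \<in> {1..L} \<Longrightarrow> l' \<in> {1..L} \<Longrightarrow>
        a \<in> {1..C l} \<Longrightarrow> c \<in> {1..C l'} \<Longrightarrow> b \<in> {1..C (l - 1) + 1} \<Longrightarrow> d \<in> {1..C (l' - 1) + 1} \<Longrightarrow>
        m \<in> {1..N} \<Longrightarrow> m' \<in> {1..N} \<Longrightarrow>
        integrable M (\<lambda>\<omega>. abar l b m \<omega> * abar l' d m' \<omega> * D n l l' a m c m' \<omega>)"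
    and int_aa: "\<And>l l' b d m m'. l \<in> {1..L} \<Longrightarrow> l' \<in> {1..L} \<Longrightarrow>
        b \<in> {1..C (l - 1) + 1} \<Longrightarrow> d \<in> {1..C (l' - 1) + 1} \<Longrightarrow>
        m \<in> {1..N} \<Longrightarrow> m' \<in> {1..N} \<Longrightarrow>
        integrable M (\<lambda>\<omega>. abar l b m \<omega> * abar l' d m' \<omega>)"
    and int_D: "\<And>n l l' a m c m'. n \<in> {1..N} \<Longrightarrow> l \<in> {1..L} \<Longrightarrow> l' \<in> {1..L} \<Longrightarrow>
        a \<in> {1..C l} \<Longrightarrow> c \<in> {1..C l'} \<Longrightarrow> m \<in> {1..N} \<Longrightarrow> m' \<in> {1..N} \<Longrightarrow>
        integrable M (D n l l' a m c m')"
    and exch: "\<And>\<sigma>. \<sigma> permutes {1..N} \<Longrightarrow>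
        distr M (PiM (fam_idx L N C) (\<lambda>_. borel)) (fam L N C abar D \<sigma>) =
        distr M (PiM (fam_idx L N C) (\<lambda>_. borel)) (fam L N C abar D id)"
    and fact: "\<And>l l' a b c d \<pi> \<pi>'. l \<in> {1..L} \<Longrightarrow> l' \<in> {1..L} \<Longrightarrow>
        a \<in> {1..C l} \<Longrightarrow> c \<in> {1..C l'} \<Longrightarrow> b \<in> {1..C (l - 1) + 1} \<Longrightarrow> d \<in> {1..C (l' - 1) + 1} \<Longrightarrow>
        \<pi> permutes {1..N} \<Longrightarrow> \<pi>' permutes {1..N} \<Longrightarrow>
        (LINT \<omega>|M. En N (\<lambda>n. abar l b (\<pi> n) \<omega> * abar l' d (\<pi>' n) \<omega> * D n l l' a (\<pi> n) c (\<pi>' n) \<omega>)) =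
        (LINT \<omega>|M. En N (\<lambda>n. abar l b (\<pi> n) \<omega> * abar l' d (\<pi>' n) \<omega>)) *
        (LINT \<omega>|M. En N (\<lambda>n. D n l l' a (\<pi> n) c (\<pi>' n) \<omega>))"
  shows "\<forall>l \<in> {1..L}. \<forall>l' \<in> {1..L}.
           \<forall>i \<in> {1..C l * (C (l - 1) + 1)}. \<forall>j \<in> {1..C l' * (C (l' - 1) + 1)}.
      Hess_blk M N C abar D l l' i j =
        khatri_rao C (Abar_blk M N abar) (H'_blk M N D) l l' i j
        + (1 / real (max (N - 1) 1)) *
          khatri_rao C (\<lambda>l l' b d. real N * Abar'_blk M N abar l l' b d - Abar_blk M N abar l l' b d)
                       (\<lambda>l l' a c. H''_blk M N D l l' a c - H'_blk M N D l l' a c) l l' i j"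

proof (intro ballI)
  fix l l' i j
  assume l: "l \<in> {1..L}" and l': "l' \<in> {1..L}"
    and i: "i \<in> {1..C l * (C (l - 1) + 1)}" and j: "j \<in> {1..C l' * (C (l' - 1) + 1)}"
  define a where "a = (i - 1) mod C l + 1"
  define b where "b = (i - 1) div C l + 1"
  define c where "c = (j - 1) mod C l' + 1"
  define d where "d = (j - 1) div C l' + 1"
  have Cl: "C l > 0" using i by (cases "C l") auto
  have Cl': "C l' > 0" using j by (cases "C l'") auto
  have a: "a \<in> {1..C l}" unfolding a_def using Cl by (auto simp: Suc_le_eq)
  have c: "c \<in> {1..C l'}" unfolding c_def using Cl' by (auto simp: Suc_le_eq)
  have b: "b \<in> {1..C (l - 1) + 1}" unfolding b_def using i Cl
    by (auto simp: Suc_le_eq less_mult_imp_div_less mult.commute)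
  have d: "d \<in> {1..C (l' - 1) + 1}" unfolding d_def using j Cl'
    by (auto simp: Suc_le_eq less_mult_imp_div_less mult.commute)
  interpret prob_space M by (rule P)
  define e where "e n m m' = (LINT \<omega>|M. abar l b m \<omega> * abar l' d m' \<omega> * D n l l' a m c m' \<omega>)" for n m m'
  define p where "p m m' = (LINT \<omega>|M. abar l b m \<omega> * abar l' d m' \<omega>)" for m m'
  define y where "y n m m' = (LINT \<omega>|M. D n l l' a m c m' \<omega>)" for n m m'
  note iaaD = int_aaD[OF _ l l' a c b d]
  note iaa = int_aa[OF l l' b d]
  note iD = int_D[OF _ l l' a c]
  have Hess: "Hess_entry M N abar D l l' a b c d = En N (\<lambda>n. \<Sum>m=1..N. \<Sum>m'=1..N. e n m m')"
    unfolding Hess_entry_def e_def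
    by (subst int_En, rule int_dsum(2), rule iaaD, assumption+) (intro En_cong int_dsum(1) iaaD)
  have Ab: "Abar_blk M N abar l l' b d = En N (\<lambda>n. p n n)"
    unfolding Abar_blk_def p_def by (rule int_En) (simp add: iaa)
  have Ab': "Abar'_blk M N abar l l' b d = En N (\<lambda>m. En N (\<lambda>m'. p m m'))"
  proof -
    have "Abar'_blk M N abar l l' b d =
        (LINT \<omega>|M. En N (\<lambda>m. En N (\<lambda>m'. abar l b m \<omega> * abar l' d m' \<omega>)))"
      unfolding Abar'_blk_def by (simp add: En_prod)
    also have "\<dots> = En N (\<lambda>m. LINT \<omega>|M. En N (\<lambda>m'. abar l b m \<omega> * abar l' d m' \<omega>))"
      by (rule int_En) (intro int_En_int, simp add: iaa)
    also have "\<dots> = En N (\<lambda>m. En N (\<lambda>m'. p m m'))"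
      unfolding p_def by (intro En_cong int_En) (simp add: iaa)
    finally show ?thesis .
  qed
  have H1: "H'_blk M N D l l' a c = En N (\<lambda>n. \<Sum>m=1..N. y n m m)"
    unfolding H'_blk_def y_def
    by (subst int_En, rule int_sum1(2), rule iD, assumption+) (intro En_cong int_sum1(1) iD)
  have H2: "H''_blk M N D l l' a c = En N (\<lambda>n. \<Sum>m=1..N. \<Sum>m'=1..N. y n m m')"
    unfolding H''_blk_def y_def
    by (subst int_En, rule int_dsum(2), rule iD, assumption+) (intro En_cong int_dsum(1) iD)
  have fact': "En N (\<lambda>n. e n (\<pi> n) (\<pi>' n)) = En N (\<lambda>n. p (\<pi> n) (\<pi>' n)) * En N (\<lambda>n. y n (\<pi> n) (\<pi>' n))"
    if \<pi>: "\<pi> permutes {1..N}" and \<pi>': "\<pi>' permutes {1..N}" for \<pi> \<pi>'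
  proof -
    have im: "\<pi> n \<in> {1..N}" "\<pi>' n \<in> {1..N}" if "n \<in> {1..N}" for n
      using that permutes_in_image[OF \<pi>] permutes_in_image[OF \<pi>'] by auto
    have "En N (\<lambda>n. e n (\<pi> n) (\<pi>' n)) =
      (LINT \<omega>|M. En N (\<lambda>n. abar l b (\<pi> n) \<omega> * abar l' d (\<pi>' n) \<omega> * D n l l' a (\<pi> n) c (\<pi>' n) \<omega>))"
      unfolding e_def by (rule int_En[symmetric]) (blast intro: iaaD im)
    also have "\<dots> = (LINT \<omega>|M. En N (\<lambda>n. abar l b (\<pi> n) \<omega> * abar l' d (\<pi>' n) \<omega>)) *
        (LINT \<omega>|M. En N (\<lambda>n. D n l l' a (\<pi> n) c (\<pi>' n) \<omega>))"
      by (rule fact[OF l l' a c b d \<pi> \<pi>'])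
    also have "\<dots> = En N (\<lambda>n. p (\<pi> n) (\<pi>' n)) * En N (\<lambda>n. y n (\<pi> n) (\<pi>' n))"
    proof -
      have 1: "(LINT \<omega>|M. En N (\<lambda>n. abar l b (\<pi> n) \<omega> * abar l' d (\<pi>' n) \<omega>)) = En N (\<lambda>n. p (\<pi> n) (\<pi>' n))"
        unfolding p_def by (rule int_En) (blast intro: iaa im)
      have 2: "(LINT \<omega>|M. En N (\<lambda>n. D n l l' a (\<pi> n) c (\<pi>' n) \<omega>)) = En N (\<lambda>n. y n (\<pi> n) (\<pi>' n))"
        unfolding y_def by (rule int_En) (blast intro: iD im)
      show ?thesis unfolding 1 2 ..
    qed
    finally show ?thesis .
  qed
  have exch': "p (\<sigma> 1) (\<sigma> 2) = p 1 2" if N2: "N \<ge> 2" and \<sigma>: "\<sigma> permutes {1..N}" for \<sigma>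
  proof -
    define g where "g x = x (Inl (l, b, 1)) * x (Inl (l', d, 2))"
      for x :: "((nat \<times> nat \<times> nat) + (nat \<times> nat \<times> nat \<times> nat \<times> nat \<times> nat \<times> nat)) \<Rightarrow> real"
    have in1: "Inl (l, b, 1) \<in> fam_idx L N C" "Inl (l', d, 2) \<in> fam_idx L N C"
      using l l' b d N2 by (auto simp: fam_idx_def)
    have gm: "g \<in> borel_measurable (PiM (fam_idx L N C) (\<lambda>_. borel))"
      unfolding g_def using in1 by measurable
    have fm: "fam L N C abar D \<tau> \<in> measurable M (PiM (fam_idx L N C) (\<lambda>_. borel))"
      if \<tau>: "\<tau> permutes {1..N}" for \<tau>
    proof -
      have im: "\<tau> n \<in> {1..N}" if "n \<in> {1..N}" for n
        using that permutes_in_image[OF \<tau>] by auto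
      have im1: "Suc 0 \<le> \<tau> n" "\<tau> n \<le> N" if "Suc 0 \<le> n" "n \<le> N" for n
        using im[of n] that by auto
      show ?thesis unfolding fam_def
      proof (rule measurable_restrict)
        fix x assume x: "x \<in> fam_idx L N C"
        show "(\<lambda>\<omega>. case x of Inl (l, b, m) \<Rightarrow> abar l b (\<tau> m) \<omega>
               | Inr (l, l', a, c, n, m, m') \<Rightarrow> D (\<tau> n) l l' a (\<tau> m) c (\<tau> m') \<omega>) \<in> borel_measurable M"
          using x by (auto simp: fam_idx_def im1 intro!: meas_a meas_D)
      qed
    qed
    have "p (\<sigma> 1) (\<sigma> 2) = integral\<^sup>L (distr M (PiM (fam_idx L N C) (\<lambda>_. borel)) (fam L N C abar D \<sigma>)) g"
      unfolding p_def using in1 by (subst integral_distr[OF fm[OF \<sigma>] gm]) (simp add: g_def fam_def)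
    also have "\<dots> = integral\<^sup>L (distr M (PiM (fam_idx L N C) (\<lambda>_. borel)) (fam L N C abar D id)) g"
      by (simp add: exch[OF \<sigma>])
    also have "\<dots> = p 1 2"
      unfolding p_def using in1 by (subst integral_distr[OF fm[OF permutes_id] gm]) (simp add: g_def fam_def)
    finally show ?thesis .
  qed
  have main: "En N (\<lambda>n. \<Sum>m=1..N. \<Sum>m'=1..N. e n m m') =
     En N (\<lambda>n. p n n) * En N (\<lambda>n. \<Sum>m=1..N. y n m m) + 1 / real (max (N - 1) 1) *
     ((real N * En N (\<lambda>m. En N (\<lambda>m'. p m m')) - En N (\<lambda>n. p n n)) *
      (En N (\<lambda>n. \<Sum>m=1..N. \<Sum>m'=1..N. y n m m') - En N (\<lambda>n. \<Sum>m=1..N. y n m m)))"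
    by (rule alg[of N e p y, OF N fact' exch'])
  show "Hess_blk M N C abar D l l' i j =
        khatri_rao C (Abar_blk M N abar) (H'_blk M N D) l l' i j
        + (1 / real (max (N - 1) 1)) *
          khatri_rao C (\<lambda>l l' b d. real N * Abar'_blk M N abar l l' b d - Abar_blk M N abar l l' b d)
                       (\<lambda>l l' a c. H''_blk M N D l l' a c - H'_blk M N D l l' a c) l l' i j"
    unfolding Hess_blk_def khatri_rao_def kron_def a_def[symmetric] b_def[symmetric]
      c_def[symmetric] d_def[symmetric] Hess Ab Ab' H1 H2 main ..
qed

end
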